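(* Let $K\subseteq\mathbb{R}^2$ be a centrally symmetric closed convex set with non-empty interior. Then $\mu_2(K)\le 2\mu_1(K)$.
   Context: For $j=1,2$, the $j$-th covering minimum is $\mu_j(K):=\inf\{t\ge0:\text{every }(2-j)\text{-dimensional affine subspace of }\mathbb{R}^2\text{ intersects }tK+\mathbb{Z}^2\}$. Thus $\mu_1(K)$ is the least $t$ such that every line meets $tK+\mathbb{Z}^2$, and $\mu_2(K)$ is the least $t$ such that $tK+\mathbb{Z}^2=\mathbb{R}^2$. $K$ is centrally symmetric if $K=2c-K$ for some $c\in\mathbb{R}^2$. *)

theory Defs
  imports "HOL-Analysis.Analysis"
begin

definition int_lattice :: "(real^2) set" where
  "int_lattice = {z. \<forall>i. z $ i \<in> \<int>}"

definition lattice_translates :: "real \<Rightarrow> (real^2) set \<Rightarrow> (real^2) set" where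
  "lattice_translates t K = {t *\<^sub>R x + z | x z. x \<in> K \<and> z \<in> int_lattice}"

definition covering_minimum :: "(real^2) set \<Rightarrow> nat \<Rightarrow> real" where
  "covering_minimum K j = Inf {t. t \<ge> 0 \<and>
     (\<forall>L. affine L \<and> aff_dim L = 2 - int j \<longrightarrow> L \<inter> lattice_translates t K \<noteq> {})}"

definition centrally_symmetric :: "(real^2) set \<Rightarrow> bool" where
  "centrally_symmetric K \<longleftrightarrow> (\<exists>c. K = (\<lambda>x. 2 *\<^sub>R c - x) ` K)"

end

theory Submission
  imports Defs
begin



lemma ge_eq: "(X::real) - R = E \<Longrightarrow> 0 \<le> E \<Longrightarrow> R \<le> X" by linarith

lemma frac2: fixes N1 N2 D1 D2 c :: real
  assumes "D1 > 0" "D2 > 0" "N1*D2 + N2*D1 - c*D1*D2 \<ge> 0"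
  shows "N1/D1 + N2/D2 \<ge> c"
proof -
  have "N1/D1 + N2/D2 = (N1*D2 + N2*D1)/(D1*D2)" using assms by (simp add: field_simps)
  also have "\<dots> \<ge> c" using assms by (simp add: le_divide_eq mult.assoc)
  finally show ?thesis .
qed

lemma E1: assumes "0 \<le> a" "a \<le> 1/2" "-1/2 \<le> p" "p \<le> -1/4" "y1 \<ge> 1/2"
  shows "(1/4*y1 + (1/4-p)*a)*(1/2-p) + (3/4*y1 - (p+1/4)*a)*(1/2-p) - 1/2*(1/2-p)*(1/2-p) \<ge> (0::real)"
proof (rule ge_eq[where X="_" and R=0, simplified])
  show "(1/4*y1 + (1/4-p)*a)*(1/2-p) + (3/4*y1 - (p+1/4)*a)*(1/2-p) - 1/2*(1/2-p)*(1/2-p) = 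
    (1/2-p)*(y1-1/2) + 2*((1/2-p)*((-p)*a)) + (1/2-p)*(1/4 - (-p/2))" by (simp add: field_simps)
  show "0 \<le> (1/2-p)*(y1-1/2) + 2*((1/2-p)*((-p)*a)) + (1/2-p)*(1/4 - (-p/2))"
    using assms by (intro add_nonneg_nonneg mult_nonneg_nonneg) auto
qed

lemma E2: assumes "0 \<le> a" "a \<le> 1/2" "-1/4 \<le> p" "p \<le> 0" "y1 \<ge> 1/2"
  shows "(1/4*y1 + (1/4-p)*a)*(p+1/2) + (1/4*y1 - (p+1/4)*a)*(1/2-p) - 1/2*(1/2-p)*(p+1/2) \<ge> (0::real)"
proof (rule ge_eq[where X="_" and R=0, simplified])
  show "(1/4*y1 + (1/4-p)*a)*(p+1/2) + (1/4*y1 - (p+1/4)*a)*(1/2-p) - 1/2*(1/2-p)*(p+1/2) = 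
    (1/4)*(y1 - 1/2) + (1/2)*((-p)*a) + (1/2)*p^2" by (simp add: field_simps power2_eq_square)
  show "0 \<le> (1/4)*(y1 - 1/2) + (1/2)*((-p)*a) + (1/2)*p^2"
    using assms by (intro add_nonneg_nonneg mult_nonneg_nonneg) auto
qed

lemma E3: assumes "0 \<le> a" "a \<le> 1/2" "1/4 \<le> q" "q \<le> 1/2" "y2 \<ge> 1/2 + q"
  shows "(3/4*y2 - (q-1/4)*a)*(q+1/2) + (1/4*y2 - (q+1/4)*a)*(q+1/2) - 1/2*(q+1/2)*(q+1/2) \<ge> (0::real)"
proof (rule ge_eq[where X="_" and R=0, simplified])
  show "(3/4*y2 - (q-1/4)*a)*(q+1/2) + (1/4*y2 - (q+1/4)*a)*(q+1/2) - 1/2*(q+1/2)*(q+1/2) = 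
    (q - (-1/2))*(y2-1/2-q) + (1/2)*((q - (-1/2))*(1/2 - q)) + (q - (-1/2))*(q*(1-2*a))" by (simp add: field_simps)
  show "0 \<le> (q - (-1/2))*(y2-1/2-q) + (1/2)*((q - (-1/2))*(1/2 - q)) + (q - (-1/2))*(q*(1-2*a))"
    using assms by (intro add_nonneg_nonneg mult_nonneg_nonneg) auto
qed

lemma E4: assumes "0 \<le> a" "a \<le> 1/2" "0 \<le> q" "q \<le> 1/4" "y2 \<ge> 1/2 + q"
  shows "(1/4*y2 + (1/4-q)*a)*(q+1/2) + (1/4*y2 - (q+1/4)*a)*(1/2-q) - 1/2*(1/2-q)*(q+1/2) \<ge> (0::real)"
proof (rule ge_eq[where X="_" and R=0, simplified])
  show "(1/4*y2 + (1/4-q)*a)*(q+1/2) + (1/4*y2 - (q+1/4)*a)*(1/2-q) - 1/2*(1/2-q)*(q+1/2) = 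
    (1/4)*(y2 - 1/2 - q) + (1/2)*(q*(1/2 - a)) + (1/2)*q^2" by (simp add: field_simps power2_eq_square)
  show "0 \<le> (1/4)*(y2 - 1/2 - q) + (1/2)*(q*(1/2 - a)) + (1/2)*q^2"
    using assms by (intro add_nonneg_nonneg mult_nonneg_nonneg) auto
qed

lemma E5: assumes "1/4 \<le> p" "p \<le> 1/2" "-1/2 \<le> q" "q \<le> -1/4" "y1 \<ge> 1/2" "y2 \<ge> 1/2 + q"
  shows "((p-1/4)*y2 + (1/4-q)*y1)*(p-q) + ((p+1/4)*y2 + (-1/4-q)*y1)*(p-q) - 1/2*(p-q)*(p-q) \<ge> (0::real)"
proof (rule ge_eq[where X="_" and R=0, simplified])
  show "((p-1/4)*y2 + (1/4-q)*y1)*(p-q) + ((p+1/4)*y2 + (-1/4-q)*y1)*(p-q) - 1/2*(p-q)*(p-q) = 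
    (p-q)*(2*(p*(y2-1/2-q)) + 2*((-q)*(y1-1/2)) + (1/2)*(p*(1 - (-2*q))) + (1/2)*((-q)*(1-2*p)))" by (simp add: field_simps)
  show "0 \<le> (p-q)*(2*(p*(y2-1/2-q)) + 2*((-q)*(y1-1/2)) + (1/2)*(p*(1 - (-2*q))) + (1/2)*((-q)*(1-2*p)))"
    using assms by (intro add_nonneg_nonneg mult_nonneg_nonneg) auto
qed

lemma E6: assumes "0 \<le> a" "a \<le> 1/2" "0 \<le> p" "p \<le> 1/4" "-1/2 \<le> q" "q \<le> -1/4" "y1 \<ge> 1/2" "y2 \<ge> 1/2 + q"
  shows "(1/4*y1 + (1/4-p)*a)*(p-q) + ((p+1/4)*y2 + (-1/4-q)*y1)*(1/2-p) - 1/2*(1/2-p)*(p-q) \<ge> (0::real)"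
proof (rule ge_eq[where X="_" and R=0, simplified])
  show "(1/4*y1 + (1/4-p)*a)*(p-q) + ((p+1/4)*y2 + (-1/4-q)*y1)*(1/2-p) - 1/2*(1/2-p)*(p-q) = 
    p*((q - (-1/2))*(1/4-p)) + (1/2)*p^2 + (y1-1/2)*(p*(q - (-1/2))) + (3/4)*((y1-1/2)*(-q-1/4)) + (1/16)*(y1-1/2) + (y2-1/2-q)*((p - (-1/4))*(1/2-p)) + a*((1/4-p)*(p-q))"
    by (simp add: field_simps power2_eq_square)
  show "0 \<le> p*((q - (-1/2))*(1/4-p)) + (1/2)*p^2 + (y1-1/2)*(p*(q - (-1/2))) + (3/4)*((y1-1/2)*(-q-1/4)) + (1/16)*(y1-1/2) + (y2-1/2-q)*((p - (-1/4))*(1/2-p)) + a*((1/4-p)*(p-q))"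
    using assms by (intro add_nonneg_nonneg mult_nonneg_nonneg) auto
qed

lemma E7: assumes "0 \<le> a" "a \<le> 1/2" "0 \<le> p" "p \<le> 1/4" "-1/4 \<le> q" "q \<le> 0" "y1 \<ge> 1/2" "y2 \<ge> 1/2 + q"
  shows "(1/4*y1 + (1/4-p)*a)*(q+1/2) + (1/4*y2 - (q+1/4)*a)*(1/2-p) - 1/2*(1/2-p)*(q+1/2) \<ge> (0::real)"
proof (cases "p + q \<le> 0")
  case True
  show ?thesis
  proof (rule ge_eq[where X="_" and R=0, simplified])
    show "(1/4*y1 + (1/4-p)*a)*(q+1/2) + (1/4*y2 - (q+1/4)*a)*(1/2-p) - 1/2*(1/2-p)*(q+1/2) = 
      (1/4)*((q - (-1/2))*(y1-1/2)) + (1/4)*((1/2-p)*(y2-1/2-q)) + (1/4)*(p*(q - (-1/2))) + (1/4)*((-(p+q))*a)"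
      by (simp add: field_simps)
    show "0 \<le> (1/4)*((q - (-1/2))*(y1-1/2)) + (1/4)*((1/2-p)*(y2-1/2-q)) + (1/4)*(p*(q - (-1/2))) + (1/4)*((-(p+q))*a)"
      using assms True by (intro add_nonneg_nonneg mult_nonneg_nonneg) auto
  qed
next
  case False
  show ?thesis
  proof (rule ge_eq[where X="_" and R=0, simplified])
    show "(1/4*y1 + (1/4-p)*a)*(q+1/2) + (1/4*y2 - (q+1/4)*a)*(1/2-p) - 1/2*(1/2-p)*(q+1/2) = 
      (1/4)*((q - (-1/2))*(y1-1/2)) + (1/4)*((1/2-p)*(y2-1/2-q)) + (1/4)*((-q)*(1/2-p)) + (1/4)*((p - (-q))*(1/2-a))"
      by (simp add: field_simps)
    show "0 \<le> (1/4)*((q - (-1/2))*(y1-1/2)) + (1/4)*((1/2-p)*(y2-1/2-q)) + (1/4)*((-q)*(1/2-p)) + (1/4)*((p - (-q))*(1/2-a))"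
      using assms False by (intro add_nonneg_nonneg mult_nonneg_nonneg) auto
  qed
qed

lemma E8: assumes "0 \<le> a" "a \<le> 1/2" "1/4 \<le> p" "p \<le> 1/2" "-1/4 \<le> q" "q \<le> 0" "y1 \<ge> 1/2" "y2 \<ge> 1/2 + q"
  shows "((p-1/4)*y2 + (1/4-q)*y1)*(q+1/2) + (1/4*y2 - (q+1/4)*a)*(p-q) - 1/2*(p-q)*(q+1/2) \<ge> (0::real)"
proof (rule ge_eq[where X="_" and R=0, simplified])
  show "((p-1/4)*y2 + (1/4-q)*y1)*(q+1/2) + (1/4*y2 - (q+1/4)*a)*(p-q) - 1/2*(p-q)*(q+1/2) = 
    (-q)*((1/2-p)*(q - (-1/4))) + (1/2)*q^2 + (y1-1/2)*((1/4-q)*(q - (-1/2))) + (y2-1/2-q)*((p-1/4)*(q - (-1/2))) + (1/4)*((y2-1/2-q)*(p-q)) + (1/2-a)*((q - (-1/4))*(p-q))"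
    by (simp add: field_simps power2_eq_square)
  show "0 \<le> (-q)*((1/2-p)*(q - (-1/4))) + (1/2)*q^2 + (y1-1/2)*((1/4-q)*(q - (-1/2))) + (y2-1/2-q)*((p-1/4)*(q - (-1/2))) + (1/4)*((y2-1/2-q)*(p-q)) + (1/2-a)*((q - (-1/4))*(p-q))"
    using assms by (intro add_nonneg_nonneg mult_nonneg_nonneg) auto
qed

definition segY :: "real \<Rightarrow> real \<Rightarrow> real \<Rightarrow> real \<Rightarrow> real \<Rightarrow> real" where
  "segY xv yv xw yw x = ((xw - x)*yv + (x - xv)*yw)/(xw - xv)"

lemma F1: assumes "0 \<le> a" "a \<le> 1/2" "-1/2 \<le> p" "p \<le> -1/4" "y1 \<ge> 1/2"
  shows "segY p y1 (1/2) a (1/4) + segY p y1 (1/2) a (-1/4) \<ge> 1/2"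
  unfolding segY_def using assms E1[OF assms] by (intro frac2) (simp_all add: algebra_simps)

lemma F2: assumes "0 \<le> a" "a \<le> 1/2" "-1/4 \<le> p" "p \<le> 0" "y1 \<ge> 1/2"
  shows "segY p y1 (1/2) a (1/4) + segY (-1/2) (-a) p y1 (-1/4) \<ge> 1/2"
  unfolding segY_def using assms E2[OF assms] by (intro frac2) (simp_all add: algebra_simps)

lemma F3: assumes "0 \<le> a" "a \<le> 1/2" "1/4 \<le> q" "q \<le> 1/2" "y2 \<ge> 1/2 + q"
  shows "segY (-1/2) (-a) q y2 (1/4) + segY (-1/2) (-a) q y2 (-1/4) \<ge> 1/2"
  unfolding segY_def using assms E3[OF assms] by (intro frac2) (simp_all add: algebra_simps)

lemma F4: assumes "0 \<le> a" "a \<le> 1/2" "0 \<le> q" "q \<le> 1/4" "y2 \<ge> 1/2 + q"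
  shows "segY q y2 (1/2) a (1/4) + segY (-1/2) (-a) q y2 (-1/4) \<ge> 1/2"
  unfolding segY_def using assms E4[OF assms] by (intro frac2) (simp_all add: algebra_simps)

lemma F5: assumes "1/4 \<le> p" "p \<le> 1/2" "-1/2 \<le> q" "q \<le> -1/4" "y1 \<ge> 1/2" "y2 \<ge> 1/2 + q"
  shows "segY q y2 p y1 (1/4) + segY q y2 p y1 (-1/4) \<ge> 1/2"
  unfolding segY_def using assms E5[OF assms] by (intro frac2) (simp_all add: algebra_simps)

lemma F6: assumes "0 \<le> a" "a \<le> 1/2" "0 \<le> p" "p \<le> 1/4" "-1/2 \<le> q" "q \<le> -1/4" "y1 \<ge> 1/2" "y2 \<ge> 1/2 + q"
  shows "segY p y1 (1/2) a (1/4) + segY q y2 p y1 (-1/4) \<ge> 1/2"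
  unfolding segY_def using assms E6[OF assms] by (intro frac2) (simp_all add: algebra_simps)

lemma F7: assumes "0 \<le> a" "a \<le> 1/2" "0 \<le> p" "p \<le> 1/4" "-1/4 \<le> q" "q \<le> 0" "y1 \<ge> 1/2" "y2 \<ge> 1/2 + q"
  shows "segY p y1 (1/2) a (1/4) + segY (-1/2) (-a) q y2 (-1/4) \<ge> 1/2"
  unfolding segY_def using assms E7[OF assms] by (intro frac2) (simp_all add: algebra_simps)

lemma F8: assumes "0 \<le> a" "a \<le> 1/2" "1/4 \<le> p" "p \<le> 1/2" "-1/4 \<le> q" "q \<le> 0" "y1 \<ge> 1/2" "y2 \<ge> 1/2 + q"
  shows "segY q y2 p y1 (1/4) + segY (-1/2) (-a) q y2 (-1/4) \<ge> 1/2"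
  unfolding segY_def using assms E8[OF assms] by (intro frac2) (simp_all add: algebra_simps)


lemma segpt:
  fixes S :: "'a::real_vector set" and X Y :: "'a \<Rightarrow> real"
  assumes S: "convex S" "V \<in> S" "W \<in> S" and le: "X V \<le> x" "x \<le> X W" "X V < X W"
    and Xl: "\<And>a b u v. X (a *\<^sub>R u + b *\<^sub>R v) = a * X u + b * X v"
    and Yl: "\<And>a b u v. Y (a *\<^sub>R u + b *\<^sub>R v) = a * Y u + b * Y v"
  shows "\<exists>U\<in>S. X U = x \<and> Y U = segY (X V) (Y V) (X W) (Y W) x"
proof -
  define t where "t = (x - X V)/(X W - X V)"
  have t0: "0 \<le> t" "t \<le> 1" using le by (auto simp: t_def field_simps)
  have t1: "1 - t = (X W - x)/(X W - X V)" using le by (simp add: t_def field_simps)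
  define U where "U = (1 - t) *\<^sub>R V + t *\<^sub>R W"
  have "U \<in> S" unfolding U_def using S t0 by (intro convexD) auto
  moreover have "X U = x"
  proof -
    have "X U = X V + t*(X W - X V)" unfolding U_def Xl by (simp add: algebra_simps)
    moreover have "t*(X W - X V) = x - X V" using le by (simp add: t_def)
    ultimately show ?thesis by simp
  qed
  moreover have "Y U = segY (X V) (Y V) (X W) (Y W) x"
  proof -
    have D: "X W - X V \<noteq> 0" using le by simp
    have "Y U = (1-t)*Y V + t*Y W" unfolding U_def Yl by simp
    also have "\<dots> = ((X W - x)/(X W - X V))*Y V + ((x - X V)/(X W - X V))*Y W" by (subst t1) (simp add: t_def)
    also have "\<dots> = segY (X V) (Y V) (X W) (Y W) x" unfolding segY_def by (simp add: add_divide_distrib)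
    finally show ?thesis .
  qed
  ultimately show ?thesis by blast
qed

lemma chord:
  fixes S :: "'a::real_vector set" and X Y :: "'a \<Rightarrow> real"
  assumes cS: "convex S" and sym: "\<And>x. x \<in> S \<Longrightarrow> -x \<in> S"
    and Xl: "\<And>a b u v. X (a *\<^sub>R u + b *\<^sub>R v) = a * X u + b * X v"
    and Yl: "\<And>a b u v. Y (a *\<^sub>R u + b *\<^sub>R v) = a * Y u + b * Y v"
    and A: "A \<in> S" "X A = 1/2" "0 \<le> Y A" "Y A \<le> 1/2"
    and P: "P \<in> S" "-1/2 \<le> X P" "X P \<le> 1/2" "Y P \<ge> 1/2"
    and Q: "Q \<in> S" "-1/2 \<le> X Q" "X Q \<le> 1/2" "Y Q - X Q \<ge> 1/2"
  shows "\<exists>U\<in>S. \<exists>L\<in>S. X U = 1/4 \<and> X L = 1/4 \<and> Y U - Y L \<ge> 1/2"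
proof -
  have Xn: "X (-u) = - X u" for u using Xl[of "-1" u 0 u] by simp
  have Yn: "Y (-u) = - Y u" for u using Yl[of "-1" u 0 u] by simp
  have fin: "\<exists>U\<in>S. \<exists>L\<in>S. X U = 1/4 \<and> X L = 1/4 \<and> Y U - Y L \<ge> 1/2"
    if "U \<in> S" "W \<in> S" "X U = 1/4" "X W = -1/4" "Y U + Y W \<ge> 1/2" for U W
    using that sym[of W] Xn[of W] Yn[of W] by (intro bexI[of _ U] bexI[of _ "-W"]) auto
  define a where "a = Y A"
  define p where "p = X P"
  define y1 where "y1 = Y P"
  define q where "q = X Q"
  define y2 where "y2 = Y Q"
  have mA: "-A \<in> S" "X (-A) = -1/2" "Y (-A) = -a" using sym[OF A(1)] Xn Yn A by (auto simp: a_def)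
  note sp = segpt[OF cS _ _ _ _ _ Xl Yl]
  have ha: "0 \<le> a" "a \<le> 1/2" using A by (auto simp: a_def)
  have hp: "-1/2 \<le> p" "p \<le> 1/2" "y1 \<ge> 1/2" using P by (auto simp: p_def y1_def)
  have hq: "-1/2 \<le> q" "q \<le> 1/2" "y2 \<ge> 1/2 + q" using Q by (auto simp: q_def y2_def)
  show ?thesis
  proof (cases "p \<le> 0")
    case True
    show ?thesis
    proof (cases "p \<le> -1/4")
      case True
      obtain U where U: "U \<in> S" "X U = 1/4" "Y U = segY p y1 (1/2) a (1/4)"
        using sp[of P A "1/4"] P A True by (auto simp: p_def y1_def a_def)
      obtain W where W: "W \<in> S" "X W = -1/4" "Y W = segY p y1 (1/2) a (-1/4)"
        using sp[of P A "-1/4"] P A True by (auto simp: p_def y1_def a_def)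
      show ?thesis using fin[OF U(1) W(1) U(2) W(2)] U W F1[of a p y1] ha hp True by simp
    next
      case False
      obtain U where U: "U \<in> S" "X U = 1/4" "Y U = segY p y1 (1/2) a (1/4)"
        using sp[of P A "1/4"] P A \<open>p \<le> 0\<close> by (auto simp: p_def y1_def a_def)
      obtain W where W: "W \<in> S" "X W = -1/4" "Y W = segY (-1/2) (-a) p y1 (-1/4)"
        using sp[of "-A" P "-1/4"] P mA False by (auto simp: p_def y1_def a_def)
      show ?thesis using fin[OF U(1) W(1) U(2) W(2)] U W F2[of a p y1] ha hp False \<open>p \<le> 0\<close> by simp
    qed
  next
    case pF: False
    show ?thesis
    proof (cases "q \<ge> 0")
      case True
      show ?thesis
      proof (cases "q \<ge> 1/4")
        case True
        obtain U where U: "U \<in> S" "X U = 1/4" "Y U = segY (-1/2) (-a) q y2 (1/4)"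
          using sp[of "-A" Q "1/4"] Q mA True by (auto simp: q_def y2_def)
        obtain W where W: "W \<in> S" "X W = -1/4" "Y W = segY (-1/2) (-a) q y2 (-1/4)"
          using sp[of "-A" Q "-1/4"] Q mA True by (auto simp: q_def y2_def)
        show ?thesis using fin[OF U(1) W(1) U(2) W(2)] U W F3[of a q y2] ha hq True by simp
      next
        case False
        obtain U where U: "U \<in> S" "X U = 1/4" "Y U = segY q y2 (1/2) a (1/4)"
          using sp[of Q A "1/4"] Q A False by (auto simp: q_def y2_def a_def)
        obtain W where W: "W \<in> S" "X W = -1/4" "Y W = segY (-1/2) (-a) q y2 (-1/4)"
          using sp[of "-A" Q "-1/4"] Q mA \<open>q \<ge> 0\<close> by (auto simp: q_def y2_def)
        show ?thesis using fin[OF U(1) W(1) U(2) W(2)] U W F4[of a q y2] ha hq False \<open>q \<ge> 0\<close> by simp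
      qed
    next
      case qF: False
      show ?thesis
      proof (cases "p \<ge> 1/4")
        case pT: True
        show ?thesis
        proof (cases "q \<le> -1/4")
          case True
          obtain U where U: "U \<in> S" "X U = 1/4" "Y U = segY q y2 p y1 (1/4)"
            using sp[of Q P "1/4"] Q P True pT by (auto simp: q_def y2_def p_def y1_def)
          obtain W where W: "W \<in> S" "X W = -1/4" "Y W = segY q y2 p y1 (-1/4)"
            using sp[of Q P "-1/4"] Q P True pT by (auto simp: q_def y2_def p_def y1_def)
          show ?thesis using fin[OF U(1) W(1) U(2) W(2)] U W F5[of p q y1 y2] hp hq True pT by simp
        next
          case False
          obtain U where U: "U \<in> S" "X U = 1/4" "Y U = segY q y2 p y1 (1/4)"
            using sp[of Q P "1/4"] Q P qF pT by (auto simp: q_def y2_def p_def y1_def)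
          obtain W where W: "W \<in> S" "X W = -1/4" "Y W = segY (-1/2) (-a) q y2 (-1/4)"
            using sp[of "-A" Q "-1/4"] Q mA False by (auto simp: q_def y2_def)
          show ?thesis using fin[OF U(1) W(1) U(2) W(2)] U W F8[of a p q y1 y2] ha hp hq False pT qF by simp
        qed
      next
        case pF2: False
        show ?thesis
        proof (cases "q \<le> -1/4")
          case True
          obtain U where U: "U \<in> S" "X U = 1/4" "Y U = segY p y1 (1/2) a (1/4)"
            using sp[of P A "1/4"] P A pF2 by (auto simp: p_def y1_def a_def)
          obtain W where W: "W \<in> S" "X W = -1/4" "Y W = segY q y2 p y1 (-1/4)"
            using sp[of Q P "-1/4"] Q P True pF by (auto simp: q_def y2_def p_def y1_def)
          show ?thesis using fin[OF U(1) W(1) U(2) W(2)] U W F6[of a p q y1 y2] ha hp hq True pF pF2 by simp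
        next
          case False
          obtain U where U: "U \<in> S" "X U = 1/4" "Y U = segY p y1 (1/2) a (1/4)"
            using sp[of P A "1/4"] P A pF2 by (auto simp: p_def y1_def a_def)
          obtain W where W: "W \<in> S" "X W = -1/4" "Y W = segY (-1/2) (-a) q y2 (-1/4)"
            using sp[of "-A" Q "-1/4"] Q mA False by (auto simp: q_def y2_def)
          show ?thesis using fin[OF U(1) W(1) U(2) W(2)] U W F7[of a p q y1 y2] ha hp hq False pF pF2 qF by simp
        qed
      qed
    qed
  qed
qed



definition lf :: "int \<times> int \<Rightarrow> real^2 \<Rightarrow> real" where
  "lf n x = real_of_int (fst n) * x$1 + real_of_int (snd n) * x$2"

lemma lf_lin: "lf n (a *\<^sub>R u + b *\<^sub>R v) = a * lf n u + b * lf n v"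
  by (simp add: lf_def algebra_simps)
lemma lf_add: "lf n (u + v) = lf n u + lf n v" by (simp add: lf_def algebra_simps)
lemma lf_diff: "lf n (u - v) = lf n u - lf n v" by (simp add: lf_def algebra_simps)
lemma lf_neg: "lf n (- u) = - lf n u" by (simp add: lf_def algebra_simps)
lemma lf_scale: "lf n (a *\<^sub>R u) = a * lf n u" by (simp add: lf_def algebra_simps)
lemma lf_cont: "continuous_on C (lf n)"
  unfolding lf_def by (intro continuous_intros)

definition hs :: "(real^2) set \<Rightarrow> int \<times> int \<Rightarrow> real" where
  "hs C n = Sup (lf n ` C)"

lemma hs_max:
  assumes "compact C" "C \<noteq> {}"
  shows "\<exists>x\<in>C. lf n x = hs C n \<and> (\<forall>y\<in>C. lf n y \<le> hs C n)"
proof -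
  obtain x where x: "x \<in> C" "\<forall>y\<in>C. lf n y \<le> lf n x"
    using continuous_attains_sup[OF assms lf_cont] by blast
  have "hs C n = lf n x" unfolding hs_def using x by (intro cSup_eq_maximum) auto
  then show ?thesis using x by auto
qed

lemma int_lattice_iff: "z \<in> int_lattice \<longleftrightarrow> z$1 \<in> \<int> \<and> z$2 \<in> \<int>"
  by (simp add: int_lattice_def forall_2)

lemma decomp:
  fixes a b c d :: int
  assumes "a*d - b*c = 1"
  shows "w = lf (a,b) w *\<^sub>R vector [real_of_int d, - real_of_int c] + lf (c,d) w *\<^sub>R vector [- real_of_int b, real_of_int a]"
proof -
  have r: "real_of_int a * real_of_int d - real_of_int b * real_of_int c = 1"
    using assms by (metis of_int_1 of_int_diff of_int_mult)
  have e1: "w$1 = (real_of_int a * w$1 + real_of_int b * w$2) * real_of_int d + (real_of_int c * w$1 + real_of_int d * w$2) * (- real_of_int b)"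
  proof -
    have "(real_of_int a * w$1 + real_of_int b * w$2) * real_of_int d + (real_of_int c * w$1 + real_of_int d * w$2) * (- real_of_int b)
       = w$1 * (real_of_int a * real_of_int d - real_of_int b * real_of_int c)" by (simp add: algebra_simps)
    then show ?thesis using r by simp
  qed
  have e2: "w$2 = (real_of_int a * w$1 + real_of_int b * w$2) * (- real_of_int c) + (real_of_int c * w$1 + real_of_int d * w$2) * real_of_int a"
  proof -
    have "(real_of_int a * w$1 + real_of_int b * w$2) * (- real_of_int c) + (real_of_int c * w$1 + real_of_int d * w$2) * real_of_int a
       = w$2 * (real_of_int a * real_of_int d - real_of_int b * real_of_int c)" by (simp add: algebra_simps)
    then show ?thesis using r by simp
  qed
  show ?thesis unfolding vec_eq_iff forall_2 lf_def using e1 e2 by simp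
qed

lemma scale_in:
  assumes "convex C" "0 \<in> C" "x \<in> C" "0 \<le> s" "s \<le> 1"
  shows "s *\<^sub>R x \<in> C"
  using convexD[OF assms(1) assms(3) assms(2), of s "1-s"] assms by simp


lemma main_lemma:
  fixes C :: "(real^2) set" and p :: "real^2"
  assumes cC: "compact C" and cvx: "convex C" and sym: "\<And>x. x \<in> C \<Longrightarrow> -x \<in> C"
    and r: "r > 0" "cball 0 r \<subseteq> C"
    and hyp: "\<And>n. n \<noteq> (0,0) \<Longrightarrow> \<exists>x\<in>C. lf n x \<ge> 1/2"
  shows "\<exists>z\<in>int_lattice. \<exists>x\<in>C. p = 2 *\<^sub>R x + z"
proof -
  have C0: "0 \<in> C" using r by auto
  then have ne: "C \<noteq> {}" by auto
  define h where "h = hs C"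
  have hmax: "\<exists>x\<in>C. lf n x = h n \<and> (\<forall>y\<in>C. lf n y \<le> h n)" for n
    unfolding h_def using hs_max[OF cC ne] by blast
  have hge: "lf n y \<le> h n" if "y \<in> C" for n y using hmax[of n] that by blast
  have hhalf: "h n \<ge> 1/2" if "n \<noteq> (0,0)" for n
    using hyp[OF that] hge by (meson order_trans)
  define N where "N = max 1 \<lceil>h (1,0) / r\<rceil>"
  define B where "B = {n::int\<times>int. n \<noteq> (0,0) \<and> \<bar>fst n\<bar> \<le> N \<and> \<bar>snd n\<bar> \<le> N}"
  have finB: "finite B"
  proof -
    have "B \<subseteq> {-N..N} \<times> {-N..N}" unfolding B_def by auto
    then show ?thesis by (rule finite_subset) auto
  qed
  have B10: "(1,0) \<in> B" unfolding B_def N_def by auto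
  have outside: "h (1,0) < h n" if "n \<noteq> (0,0)" "n \<notin> B" for n
  proof -
    have hN: "h (1,0) \<le> r * of_int N"
    proof -
      have "h (1,0) / r \<le> of_int N" unfolding N_def by linarith
      then show ?thesis using r by (simp add: field_simps)
    qed
    have "\<bar>fst n\<bar> > N \<or> \<bar>snd n\<bar> > N" using that unfolding B_def by auto
    then show ?thesis
    proof
      assume big: "\<bar>fst n\<bar> > N"
      define x where "x = (r * sgn (real_of_int (fst n))) *\<^sub>R (axis 1 1 :: real^2)"
      have "norm x \<le> r" unfolding x_def using r by (auto simp: abs_mult sgn_if)
      then have "x \<in> C" using r by auto
      moreover have "lf n x = r * \<bar>real_of_int (fst n)\<bar>"
        unfolding x_def lf_def by (simp add: axis_def abs_sgn mult.commute)
      ultimately have "r * \<bar>real_of_int (fst n)\<bar> \<le> h n" using hge by metis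
      moreover have "r * of_int N < r * \<bar>real_of_int (fst n)\<bar>" using big r by simp
      ultimately show ?thesis using hN by linarith
    next
      assume big: "\<bar>snd n\<bar> > N"
      define x where "x = (r * sgn (real_of_int (snd n))) *\<^sub>R (axis 2 1 :: real^2)"
      have "norm x \<le> r" unfolding x_def using r by (auto simp: abs_mult sgn_if)
      then have "x \<in> C" using r by auto
      moreover have "lf n x = r * \<bar>real_of_int (snd n)\<bar>"
        unfolding x_def lf_def by (simp add: axis_def abs_sgn mult.commute)
      ultimately have "r * \<bar>real_of_int (snd n)\<bar> \<le> h n" using hge by metis
      moreover have "r * of_int N < r * \<bar>real_of_int (snd n)\<bar>" using big r by simp
      ultimately show ?thesis using hN by linarith
    qed
  qed
  obtain n0 where n0B: "n0 \<in> B" and n0min: "h n0 = Min (h ` B)"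
    using Min_in[of "h ` B"] finB B10 by fastforce
  have minB: "h n0 \<le> h n" if "n \<in> B" for n using n0min finB that by simp
  have min: "h n0 \<le> h n" if "n \<noteq> (0,0)" for n
    using minB[of n] minB[OF B10] outside[OF that] by (cases "n \<in> B") auto
  define \<alpha> where "\<alpha> = h n0"
  have n0nz: "n0 \<noteq> (0,0)" using n0B unfolding B_def by auto
  have al: "\<alpha> \<ge> 1/2" unfolding \<alpha>_def using hhalf[OF n0nz] .
  obtain a b where ab: "n0 = (a,b)" by (cases n0)
  have gcd1: "gcd a b = 1"
  proof (rule ccontr)
    assume ng: "gcd a b \<noteq> 1"
    define g where "g = gcd a b"
    have "g \<noteq> 0" using n0nz ab unfolding g_def by auto
    then have g1: "g > 1" using ng unfolding g_def by (smt (verit) gcd_ge_0_int)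
    define n1 where "n1 = (a div g, b div g)"
    have aeq: "a = g * (a div g)" "b = g * (b div g)" unfolding g_def by simp_all
    have n1nz: "n1 \<noteq> (0,0)"
    proof
      assume "n1 = (0,0)"
      then have "a div g = 0" "b div g = 0" by (auto simp: n1_def)
      then have "a = 0" "b = 0" using aeq by (metis mult_zero_right)+
      then show False using n0nz ab by simp
    qed
    obtain x1 where x1: "x1 \<in> C" "lf n1 x1 = h n1" using hmax[of n1] by blast
    have ra: "real_of_int a = real_of_int g * real_of_int (a div g)" "real_of_int b = real_of_int g * real_of_int (b div g)"
      using aeq by (metis of_int_mult)+
    have "lf n0 x1 = real_of_int g * lf n1 x1"
      unfolding ab n1_def lf_def fst_conv snd_conv by (subst ra(1), subst ra(2)) (simp add: algebra_simps)
    then have gh: "real_of_int g * h n1 \<le> \<alpha>" using x1 hge[OF x1(1), of n0] unfolding \<alpha>_def by simp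
    have ah: "\<alpha> \<le> h n1" unfolding \<alpha>_def using min[OF n1nz] .
    have g2: "real_of_int g \<ge> 2" using g1 by simp
    have "2 * h n1 \<le> real_of_int g * h n1" using g2 ah al by (intro mult_right_mono) auto
    then show False using gh ah al by linarith
  qed
  obtain u1 v1 where uv: "u1 * a + v1 * b = 1" using bezout_int[of a b] gcd1 by auto
  obtain A where A: "A \<in> C" "lf n0 A = \<alpha>" using hmax[of n0] unfolding \<alpha>_def by blast
  have Xb: "-\<alpha> \<le> lf n0 y \<and> lf n0 y \<le> \<alpha>" if "y \<in> C" for y
    using hge[OF that, of n0] hge[OF sym[OF that], of n0] lf_neg unfolding \<alpha>_def by fastforce
  define c0 where "c0 = - v1"
  define d0 where "d0 = u1"
  define k where "k = \<lfloor>lf (c0,d0) A / \<alpha>\<rfloor>"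
  define c where "c = c0 - k*a"
  define d where "d = d0 - k*b"
  have det: "a*d - b*c = 1" unfolding c_def d_def c0_def d0_def using uv by (simp add: algebra_simps)
  have lfn2: "lf (c,d) x = lf (c0,d0) x - of_int k * lf n0 x" for x
    unfolding ab lf_def c_def d_def by (simp add: algebra_simps)
  have apos: "\<alpha> > 0" using al by simp
  have YA: "0 \<le> lf (c,d) A" "lf (c,d) A < \<alpha>"
  proof -
    have "of_int k \<le> lf (c0,d0) A / \<alpha>" "lf (c0,d0) A / \<alpha> < of_int k + 1" unfolding k_def by linarith+
    then have "of_int k * \<alpha> \<le> lf (c0,d0) A" "lf (c0,d0) A < (of_int k + 1) * \<alpha>"
      using apos by (simp_all add: field_simps)
    then show "0 \<le> lf (c,d) A" "lf (c,d) A < \<alpha>" using lfn2[of A] A(2) by (simp_all add: algebra_simps)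
  qed
  have n2nz: "(c,d) \<noteq> (0,0)" using det by auto
  have n3nz: "(c-a,d-b) \<noteq> (0,0)"
  proof
    assume "(c-a,d-b) = (0,0)"
    then have "c = a" "d = b" by auto
    then show False using det by (simp add: mult.commute)
  qed
  obtain P where P: "P \<in> C" "lf (c,d) P = h (c,d)" using hmax[of "(c,d)"] by blast
  have PY: "lf (c,d) P \<ge> \<alpha>" using P min[OF n2nz] unfolding \<alpha>_def by simp
  obtain Q where Q: "Q \<in> C" "lf (c-a,d-b) Q = h (c-a,d-b)" using hmax[of "(c-a,d-b)"] by blast
  have QY: "lf (c,d) Q - lf n0 Q \<ge> \<alpha>"
  proof -
    have "lf (c-a,d-b) Q = lf (c,d) Q - lf n0 Q" unfolding ab lf_def by (simp add: algebra_simps)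
    then show ?thesis using Q min[OF n3nz] unfolding \<alpha>_def by simp
  qed
  define s where "s = 1/(2*\<alpha>)"
  have s01: "0 \<le> s" "s \<le> 1" using al unfolding s_def by (simp_all add: field_simps)
  have sal: "s * \<alpha> = 1/2" unfolding s_def using apos by simp
  have sA: "s *\<^sub>R A \<in> C" "s *\<^sub>R P \<in> C" "s *\<^sub>R Q \<in> C"
    using scale_in[OF cvx C0 _ s01] A P Q by auto
  have XA: "lf n0 (s *\<^sub>R A) = 1/2" using A sal by (simp add: lf_scale mult.commute)
  have YA': "0 \<le> lf (c,d) (s *\<^sub>R A)" "lf (c,d) (s *\<^sub>R A) \<le> 1/2"
  proof -
    show "0 \<le> lf (c,d) (s *\<^sub>R A)" using YA s01 by (simp add: lf_scale)
    have "s * lf (c,d) A \<le> s * \<alpha>" using YA s01 by (intro mult_left_mono) auto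
    then show "lf (c,d) (s *\<^sub>R A) \<le> 1/2" using sal by (simp add: lf_scale)
  qed
  have XP: "-1/2 \<le> lf n0 (s *\<^sub>R P)" "lf n0 (s *\<^sub>R P) \<le> 1/2"
  proof -
    have "s * lf n0 P \<le> s * \<alpha>" "s * (-\<alpha>) \<le> s * lf n0 P" using Xb[OF P(1)] s01 by (intro mult_left_mono; simp)+
    then show "-1/2 \<le> lf n0 (s *\<^sub>R P)" "lf n0 (s *\<^sub>R P) \<le> 1/2" using sal by (simp_all add: lf_scale)
  qed
  have YP: "lf (c,d) (s *\<^sub>R P) \<ge> 1/2"
  proof -
    have "s * \<alpha> \<le> s * lf (c,d) P" using PY s01 by (intro mult_left_mono) auto
    then show ?thesis using sal by (simp add: lf_scale)
  qed
  have XQ: "-1/2 \<le> lf n0 (s *\<^sub>R Q)" "lf n0 (s *\<^sub>R Q) \<le> 1/2"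
  proof -
    have "s * lf n0 Q \<le> s * \<alpha>" "s * (-\<alpha>) \<le> s * lf n0 Q" using Xb[OF Q(1)] s01 by (intro mult_left_mono; simp)+
    then show "-1/2 \<le> lf n0 (s *\<^sub>R Q)" "lf n0 (s *\<^sub>R Q) \<le> 1/2" using sal by (simp_all add: lf_scale)
  qed
  have YQ: "lf (c,d) (s *\<^sub>R Q) - lf n0 (s *\<^sub>R Q) \<ge> 1/2"
  proof -
    have "s * \<alpha> \<le> s * (lf (c,d) Q - lf n0 Q)" using QY s01 by (intro mult_left_mono) auto
    then show ?thesis using sal by (simp add: lf_scale algebra_simps)
  qed
  obtain U L where UL: "U \<in> C" "L \<in> C" "lf n0 U = 1/4" "lf n0 L = 1/4" "lf (c,d) U - lf (c,d) L \<ge> 1/2"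
    using chord[OF cvx sym lf_lin lf_lin sA(1) XA YA' sA(2) XP YP sA(3) XQ YQ] by blast
  define uu :: "real^2" where "uu = vector [- real_of_int b, real_of_int a]"
  define mm :: "real^2" where "mm = vector [real_of_int d, - real_of_int c]"
  have dec: "w = lf n0 w *\<^sub>R mm + lf (c,d) w *\<^sub>R uu" for w
    unfolding ab mm_def uu_def using decomp[OF det] .
  have Xu: "lf n0 uu = 0" "lf (c,d) uu = 1" "lf n0 mm = 1" "lf (c,d) mm = 0"
  proof -
    have r: "real_of_int a * real_of_int d - real_of_int b * real_of_int c = 1"
      using det by (metis of_int_1 of_int_diff of_int_mult)
    show "lf n0 uu = 0" "lf (c,d) uu = 1" "lf n0 mm = 1" "lf (c,d) mm = 0"
      unfolding ab uu_def mm_def lf_def using r by (simp_all add: algebra_simps)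
  qed
  define g where "g = lf (c,d) U - lf (c,d) L"
  have UL2: "U - L = g *\<^sub>R uu"
    using dec[of "U - L"] UL unfolding g_def by (simp add: lf_diff)
  define V' where "V' = L + (1/2) *\<^sub>R uu"
  have V'C: "V' \<in> C"
  proof -
    define t where "t = 1/(2*g)"
    have g: "g \<ge> 1/2" using UL unfolding g_def by simp
    have t01: "0 \<le> t" "t \<le> 1" using g unfolding t_def by (simp_all add: field_simps)
    have "(1 - t) *\<^sub>R L + t *\<^sub>R U = L + t *\<^sub>R (U - L)" by (simp add: algebra_simps)
    also have "\<dots> = V'" unfolding UL2 V'_def t_def using g by simp
    finally show ?thesis using convexD[OF cvx UL(2) UL(1), of "1-t" t] t01 by simp
  qed
  have XV': "lf n0 V' = 1/4" unfolding V'_def using UL Xu by (simp add: lf_add lf_scale)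
  define K where "K = \<lfloor>lf n0 p + 1/2\<rfloor>"
  define ofs where "ofs = lf n0 p - of_int K"
  have o: "-1/2 \<le> ofs" "ofs < 1/2" unfolding ofs_def K_def by linarith+
  define lam where "lam = ofs + 1/2"
  have lam: "0 \<le> lam" "lam \<le> 1" using o unfolding lam_def by simp_all
  define R where "R = lam *\<^sub>R L + (1 - lam) *\<^sub>R (- V')"
  define R' where "R' = lam *\<^sub>R V' + (1 - lam) *\<^sub>R (- L)"
  have RC: "R \<in> C" "R' \<in> C"
    unfolding R_def R'_def
    using convexD[OF cvx UL(2) sym[OF V'C], of lam "1-lam"] convexD[OF cvx V'C sym[OF UL(2)], of lam "1-lam"] lam
    by auto
  have RR: "R' = R + (1/2) *\<^sub>R uu"
  proof -
    have e: "(lam / 2) *\<^sub>R uu + ((1 - lam) / 2) *\<^sub>R uu = (1 / 2) *\<^sub>R uu"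
      by (simp add: scaleR_add_left[symmetric] add_divide_distrib[symmetric])
    show ?thesis unfolding R'_def R_def V'_def using e by (simp add: algebra_simps)
  qed
  have XR: "lf n0 R = ofs/2"
  proof -
    have "lf n0 R = lam * lf n0 L + (1-lam) * lf n0 (-V')" unfolding R_def by (rule lf_lin)
    also have "\<dots> = lam * (1/4) - (1-lam) * (1/4)" unfolding lf_neg UL(4) XV' by simp
    also have "\<dots> = ofs/2" by (simp add: lam_def field_simps)
    finally show ?thesis .
  qed
  define w where "w = p - of_int K *\<^sub>R mm - 2 *\<^sub>R R"
  have Xw: "lf n0 w = 0" unfolding w_def using Xu XR by (simp add: lf_diff lf_scale ofs_def)
  have w: "w = lf (c,d) w *\<^sub>R uu" using dec[of w] Xw by simp
  define J where "J = \<lfloor>lf (c,d) w\<rfloor>"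
  define \<tau> where "\<tau> = lf (c,d) w - of_int J"
  have tau: "0 \<le> \<tau>" "\<tau> \<le> 1" unfolding \<tau>_def J_def by linarith+
  define x where "x = (1 - \<tau>) *\<^sub>R R + \<tau> *\<^sub>R R'"
  have xC: "x \<in> C" unfolding x_def using convexD[OF cvx RC] tau by simp
  define z where "z = of_int K *\<^sub>R mm + of_int J *\<^sub>R uu"
  have zL: "z \<in> int_lattice" unfolding int_lattice_iff z_def mm_def uu_def
    by (simp add: Ints_add Ints_mult Ints_minus)
  have "p = 2 *\<^sub>R x + z"
  proof -
    have "2 *\<^sub>R x = 2 *\<^sub>R R + \<tau> *\<^sub>R uu" unfolding x_def RR by (simp add: algebra_simps)
    then have "2 *\<^sub>R x + z = of_int K *\<^sub>R mm + 2 *\<^sub>R R + (\<tau> + of_int J) *\<^sub>R uu"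
      unfolding z_def by (simp add: algebra_simps)
    also have "\<tau> + of_int J = lf (c,d) w" unfolding \<tau>_def by simp
    also have "of_int K *\<^sub>R mm + 2 *\<^sub>R R + lf (c,d) w *\<^sub>R uu = p"
    proof -
      have e: "lf (c,d) w *\<^sub>R uu = w" using w by simp
      show ?thesis by (subst e) (simp add: w_def algebra_simps)
    qed
    finally show ?thesis by simp
  qed
  then show ?thesis using zL xC by blast
qed



lemma inner2: "(x::real^2) \<bullet> y = x$1 * y$1 + x$2 * y$2"
  by (simp add: inner_vec_def sum_2)

lemma lf_inner: "lf n y = vector [real_of_int (fst n), real_of_int (snd n)] \<bullet> y"
  by (simp add: inner2 lf_def)

lemma lf_int: "z \<in> int_lattice \<Longrightarrow> lf n z \<in> \<int>"
  unfolding int_lattice_iff lf_def by (auto intro!: Ints_add Ints_mult)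

lemma line_dim:
  assumes "(a::real^2) \<noteq> 0"
  shows "affine {x. a \<bullet> x = r}" "aff_dim {x. a \<bullet> x = r} = 1"
  using assms by (simp_all add: affine_hyperplane)

lemma aff1_ne: "aff_dim (L::(real^2) set) = 1 \<Longrightarrow> L \<noteq> {}"
  by auto

lemma ball_center:
  fixes K :: "(real^2) set"
  assumes "convex K" "\<And>x. x \<in> K \<Longrightarrow> 2 *\<^sub>R c - x \<in> K" "ball c1 e \<subseteq> K"
  shows "ball c e \<subseteq> K"
proof
  fix y assume y: "y \<in> ball c e"
  have "c1 + (y - c) \<in> K" "c1 - (y - c) \<in> K" using y assms(3) by (auto simp: dist_norm norm_minus_commute)
  then have "c1 + (y - c) \<in> K" "2 *\<^sub>R c - (c1 - (y - c)) \<in> K" using assms(2) by auto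
  from convexD[OF assms(1) this, of "1/2" "1/2"]
  moreover have "(1/2) *\<^sub>R (c1 + (y - c)) + (1/2) *\<^sub>R (2 *\<^sub>R c - (c1 - (y - c))) = y"
    by (simp add: vec_eq_iff field_simps)
  ultimately show "y \<in> K" by simp
qed


lemma lattice_step:
  fixes K :: "(real^2) set"
  assumes cK: "closed K" and vK: "convex K" and symK: "\<And>x. x \<in> K \<Longrightarrow> 2 *\<^sub>R cc - x \<in> K"
    and e: "e > 0" "ball cc e \<subseteq> K" and t: "t > 0"
    and lines: "\<And>L. affine L \<Longrightarrow> aff_dim L = 1 \<Longrightarrow> L \<inter> lattice_translates t K \<noteq> {}"
  shows "p \<in> lattice_translates (2*t) K"
proof -
  define C0 where "C0 = (\<lambda>x. t *\<^sub>R x) ` ((+) (- cc) ` K)"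
  have memC0: "y \<in> C0 \<longleftrightarrow> (\<exists>x\<in>K. y = t *\<^sub>R (x - cc))" for y
    unfolding C0_def by (auto simp: image_iff algebra_simps)
  have clC0: "closed C0" unfolding C0_def by (intro closed_scaling closed_translation cK)
  have cvC0: "convex C0" unfolding C0_def by (intro convex_scaling convex_translation vK)
  have symC0: "-y \<in> C0" if yC: "y \<in> C0" for y
  proof -
    obtain x where x: "x \<in> K" "y = t *\<^sub>R (x - cc)" using yC memC0 by auto
    have "-y = t *\<^sub>R ((2 *\<^sub>R cc - x) - cc)" using x by (simp add: algebra_simps scaleR_2)
    then show ?thesis using symK[OF x(1)] memC0 by blast
  qed
  define \<rho> where "\<rho> = t * e / 2"
  have rho: "\<rho> > 0" unfolding \<rho>_def using t e by simp
  have ballC0: "cball 0 \<rho> \<subseteq> C0"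
  proof
    fix y :: "real^2" assume "y \<in> cball 0 \<rho>"
    then have ny: "norm y \<le> \<rho>" by simp
    define x where "x = cc + (1/t) *\<^sub>R y"
    have "dist cc x = norm y / t" unfolding x_def using t by (simp add: dist_norm)
    also have "\<dots> \<le> \<rho> / t" using ny t by (simp add: divide_right_mono)
    also have "\<dots> < e" unfolding \<rho>_def using t e by simp
    finally have "x \<in> K" using e by auto
    moreover have "y = t *\<^sub>R (x - cc)" unfolding x_def using t by simp
    ultimately show "y \<in> C0" using memC0 by blast
  qed
  have hyp0: "\<exists>y\<in>C0. lf n y \<ge> 1/2" if n: "n \<noteq> (0,0)" for n
  proof -
    define nv :: "real^2" where "nv = vector [real_of_int (fst n), real_of_int (snd n)]"
    have nvnz: "nv \<noteq> 0"
    proof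
      assume "nv = 0"
      then have "real_of_int (fst n) = 0" "real_of_int (snd n) = 0"
        unfolding nv_def by (metis vector_2 zero_index)+
      then show False using n by (cases n) auto
    qed
    define L where "L = {y. nv \<bullet> y = 1/2 + nv \<bullet> (t *\<^sub>R cc)}"
    have "L \<inter> lattice_translates t K \<noteq> {}" using lines line_dim[OF nvnz] unfolding L_def by blast
    then obtain x z where xz: "x \<in> K" "z \<in> int_lattice" "t *\<^sub>R x + z \<in> L"
      unfolding lattice_translates_def by blast
    define w where "w = t *\<^sub>R (x - cc)"
    have wC: "w \<in> C0" "-w \<in> C0" using xz memC0 symC0 unfolding w_def by blast+
    have "lf n (t *\<^sub>R x + z) = 1/2 + lf n (t *\<^sub>R cc)" using xz(3) unfolding L_def lf_inner nv_def by simp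
    then have lw: "lf n w = 1/2 - lf n z" unfolding w_def by (simp add: lf_add lf_diff lf_scale algebra_simps)
    obtain k where k: "lf n z = of_int k" using lf_int[OF xz(2)] Ints_cases by metis
    show ?thesis
    proof (cases "k \<le> 0")
      case True
      then have "lf n w \<ge> 1/2" using lw k by simp
      then show ?thesis using wC by blast
    next
      case False
      then have "of_int k \<ge> (1::real)" by simp
      then have "lf n (-w) \<ge> 1/2" using lw k by (simp add: lf_neg)
      then show ?thesis using wC by blast
    qed
  qed
  define M where "M = \<lceil>1/(2*\<rho>)\<rceil>"
  define FB where "FB = {n::int\<times>int. n \<noteq> (0,0) \<and> \<bar>fst n\<bar> \<le> M \<and> \<bar>snd n\<bar> \<le> M}"
  have finFB: "finite FB"
  proof -
    have "FB \<subseteq> {-M..M} \<times> {-M..M}" unfolding FB_def by auto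
    then show ?thesis by (rule finite_subset) auto
  qed
  define wit where "wit n = (SOME y. y \<in> C0 \<and> lf n y \<ge> 1/2)" for n
  have wit: "wit n \<in> C0" "lf n (wit n) \<ge> 1/2" if "n \<noteq> (0,0)" for n
  proof -
    have ex: "\<exists>y. y \<in> C0 \<and> lf n y \<ge> 1/2" using hyp0[OF that] by blast
    show "wit n \<in> C0" "lf n (wit n) \<ge> 1/2" using someI_ex[OF ex] unfolding wit_def by blast+
  qed
  define R where "R = \<rho> + (\<Sum>n\<in>FB. norm (wit n))"
  have witR: "norm (wit n) \<le> R" if "n \<in> FB" for n
  proof -
    have "norm (wit n) \<le> (\<Sum>n\<in>FB. norm (wit n))" using member_le_sum[OF that _ finFB, of "\<lambda>n. norm (wit n)"] by simp
    then show ?thesis unfolding R_def using rho by simp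
  qed
  have rhoR: "\<rho> \<le> R" unfolding R_def by (simp add: sum_nonneg)
  define C where "C = C0 \<inter> cball 0 R"
  have cC: "compact C" unfolding C_def using clC0 by (intro closed_Int_compact) auto
  have vC: "convex C" unfolding C_def using cvC0 by (intro convex_Int convex_cball)
  have sC: "-x \<in> C" if "x \<in> C" for x using that symC0 unfolding C_def by auto
  have bC: "cball 0 \<rho> \<subseteq> C" unfolding C_def using ballC0 rhoR by auto
  have hC: "\<exists>x\<in>C. lf n x \<ge> 1/2" if n: "n \<noteq> (0,0)" for n
  proof (cases "n \<in> FB")
    case True
    then show ?thesis using wit[OF n] witR[OF True] unfolding C_def by auto
  next
    case False
    have M: "1/(2*\<rho>) \<le> of_int M" unfolding M_def by linarith
    have hM: "1/2 \<le> \<rho> * of_int M"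
    proof -
      have "1/(2*\<rho>) * \<rho> \<le> of_int M * \<rho>" using M rho by (intro mult_right_mono) auto
      then show ?thesis using rho by (simp add: field_simps)
    qed
    have "\<bar>fst n\<bar> > M \<or> \<bar>snd n\<bar> > M" using False n unfolding FB_def by auto
    then show ?thesis
    proof
      assume big: "\<bar>fst n\<bar> > M"
      define x where "x = (\<rho> * sgn (real_of_int (fst n))) *\<^sub>R (axis 1 1 :: real^2)"
      have "norm x \<le> \<rho>" unfolding x_def using rho by (auto simp: abs_mult sgn_if)
      then have "x \<in> C" using bC by auto
      moreover have "lf n x = \<rho> * \<bar>real_of_int (fst n)\<bar>"
        unfolding x_def lf_def by (simp add: axis_def abs_sgn mult.commute)
      moreover have "\<rho> * of_int M \<le> \<rho> * \<bar>real_of_int (fst n)\<bar>" using big rho by simp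
      ultimately show ?thesis using hM by (intro bexI[of _ x]) auto
    next
      assume big: "\<bar>snd n\<bar> > M"
      define x where "x = (\<rho> * sgn (real_of_int (snd n))) *\<^sub>R (axis 2 1 :: real^2)"
      have "norm x \<le> \<rho>" unfolding x_def using rho by (auto simp: abs_mult sgn_if)
      then have "x \<in> C" using bC by auto
      moreover have "lf n x = \<rho> * \<bar>real_of_int (snd n)\<bar>"
        unfolding x_def lf_def by (simp add: axis_def abs_sgn mult.commute)
      moreover have "\<rho> * of_int M \<le> \<rho> * \<bar>real_of_int (snd n)\<bar>" using big rho by simp
      ultimately show ?thesis using hM by (intro bexI[of _ x]) auto
    qed
  qed
  obtain z x where zx: "z \<in> int_lattice" "x \<in> C" "p - (2*t) *\<^sub>R cc = 2 *\<^sub>R x + z"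
    using main_lemma[OF cC vC sC rho bC hC, of "p - (2*t) *\<^sub>R cc"] by blast
  obtain k where k: "k \<in> K" "x = t *\<^sub>R (k - cc)" using zx(2) memC0 unfolding C_def by auto
  have "p = (2*t) *\<^sub>R k + z" using zx(3) k(2) by (simp add: algebra_simps)
  then show ?thesis unfolding lattice_translates_def using k(1) zx(1) by blast
qed


lemma half_not_int: "(1/2::real) \<notin> \<int>"
proof
  assume "(1/2::real) \<in> \<int>"
  then obtain k where k: "(1/2::real) = of_int k" by (auto elim!: Ints_cases)
  then have "real_of_int (2*k) = 1" by simp
  then have "2*k = 1" by (simp only: of_int_eq_1_iff)
  then show False by presburger
qed

theorem theorem5:
  fixes K :: "(real^2) set"
  assumes "closed K" and "convex K" and "interior K \<noteq> {}"
    and "centrally_symmetric K"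
  shows "covering_minimum K 2 \<le> 2 * covering_minimum K 1"
proof -
  obtain cc where cc: "K = (\<lambda>x. 2 *\<^sub>R cc - x) ` K"
    using assms(4) unfolding centrally_symmetric_def by blast
  have symK: "2 *\<^sub>R cc - x \<in> K" if xK: "x \<in> K" for x
  proof -
    have "x \<in> (\<lambda>x. 2 *\<^sub>R cc - x) ` K" using cc xK by simp
    then obtain y where "y \<in> K" "x = 2 *\<^sub>R cc - y" by blast
    then show ?thesis by simp
  qed
  obtain c1 where "c1 \<in> interior K" using assms(3) by blast
  then obtain e1 where e1: "e1 > 0" "ball c1 e1 \<subseteq> K" using mem_interior by blast
  have ballc: "ball cc e1 \<subseteq> K" by (rule ball_center[OF assms(2) symK e1(2)])
  define S1 where "S1 = {t. t \<ge> 0 \<and> (\<forall>L. affine L \<and> aff_dim L = 2 - int 1 \<longrightarrow> L \<inter> lattice_translates t K \<noteq> {})}"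
  define S2 where "S2 = {t. t \<ge> 0 \<and> (\<forall>L. affine L \<and> aff_dim L = 2 - int 2 \<longrightarrow> L \<inter> lattice_translates t K \<noteq> {})}"
  have cm1: "covering_minimum K 1 = Inf S1" unfolding covering_minimum_def S1_def by (rule refl)
  have cm2: "covering_minimum K 2 = Inf S2" unfolding covering_minimum_def S2_def by (rule refl)
  have S1ne: "2/e1 \<in> S1"
  proof -
    define t0 where "t0 = 2/e1"
    have t0: "t0 > 0" unfolding t0_def using e1 by simp
    have all: "p \<in> lattice_translates t0 K" for p
    proof -
      define q where "q = p - t0 *\<^sub>R cc"
      define z :: "real^2" where "z = vector [real_of_int \<lfloor>q$1 + 1/2\<rfloor>, real_of_int \<lfloor>q$2 + 1/2\<rfloor>]"
      have zL: "z \<in> int_lattice" unfolding int_lattice_iff z_def by simp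
      have d11: "\<bar>(q - z)$1\<bar> \<le> 1/2"
      proof -
        have "(q - z)$1 = q$1 - real_of_int \<lfloor>q$1 + 1/2\<rfloor>" unfolding z_def by simp
        then show ?thesis by linarith
      qed
      have d12: "\<bar>(q - z)$2\<bar> \<le> 1/2"
      proof -
        have "(q - z)$2 = q$2 - real_of_int \<lfloor>q$2 + 1/2\<rfloor>" unfolding z_def by simp
        then show ?thesis by linarith
      qed
      note d1 = d11 d12
      have nq: "norm (q - z) \<le> 1"
        using norm_le_l1_cart[of "q - z"] d1 by (simp add: sum_2)
      define x where "x = cc + (1/t0) *\<^sub>R (q - z)"
      have "dist cc x = norm (q - z) / t0" unfolding x_def using t0 by (simp add: dist_norm)
      also have "\<dots> \<le> 1 / t0" using nq t0 by (simp add: divide_right_mono)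
      also have "\<dots> < e1" unfolding t0_def using e1 by simp
      finally have "x \<in> K" using ballc by auto
      moreover have "p = t0 *\<^sub>R x + z" unfolding x_def q_def using t0 by (simp add: algebra_simps)
      ultimately show ?thesis unfolding lattice_translates_def using zL by blast
    qed
    show ?thesis unfolding S1_def
    proof (intro CollectI conjI allI impI)
      show "0 \<le> 2/e1" using e1 by simp
      fix L :: "(real^2) set" assume "affine L \<and> aff_dim L = 2 - int 1"
      then have "aff_dim L = 1" by simp
      then obtain p where "p \<in> L" using aff1_ne by blast
      then show "L \<inter> lattice_translates (2/e1) K \<noteq> {}" using all[of p] unfolding t0_def by blast
    qed
  qed
  have step: "2*t \<in> S2" if tS: "t \<in> S1" for t
  proof -
    have t0: "t \<ge> 0" and lines: "\<And>L. affine L \<Longrightarrow> aff_dim L = 1 \<Longrightarrow> L \<inter> lattice_translates t K \<noteq> {}"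
      using tS unfolding S1_def by auto
    have tpos: "t > 0"
    proof (rule ccontr)
      assume "\<not> t > 0"
      then have t00: "t = 0" using t0 by simp
      have ax: "axis 2 (1::real) \<noteq> (0::real^2)" by simp
      have "{x. axis 2 1 \<bullet> x = (1/2::real)} \<inter> lattice_translates t K \<noteq> {}"
        by (rule lines[OF line_dim(1)[OF ax] line_dim(2)[OF ax]])
      then obtain x z where xz: "x \<in> K" "z \<in> int_lattice" "axis 2 1 \<bullet> (t *\<^sub>R x + z) = (1/2::real)"
        unfolding lattice_translates_def by blast
      have zz: "z$2 = 1/2" using xz(3) t00 by (simp add: inner_axis')
      have zi: "z$2 \<in> \<int>" using xz(2) unfolding int_lattice_iff by simp
      have "(1/2::real) \<in> \<int>" using zi unfolding zz .
      then show False using half_not_int by (rule notE[rotated])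
    qed
    show ?thesis unfolding S2_def
    proof (intro CollectI conjI allI impI)
      show "0 \<le> 2*t" using t0 by simp
      fix L :: "(real^2) set" assume "affine L \<and> aff_dim L = 2 - int 2"
      then have "aff_dim L = 0" by simp
      then obtain p where Lp: "L = {p}" using aff_dim_eq_0 by blast
      have "p \<in> lattice_translates (2*t) K"
        by (rule lattice_step[OF assms(1) assms(2) symK e1(1) ballc tpos lines])
      then show "L \<inter> lattice_translates (2*t) K \<noteq> {}" using Lp by blast
    qed
  qed
  have bdd: "bdd_below S2" unfolding S2_def by (rule bdd_belowI[of _ 0]) auto
  have "Inf S2 / 2 \<le> t" if "t \<in> S1" for t
    using cInf_lower[OF step[OF that] bdd] by simp
  then have "Inf S2 / 2 \<le> Inf S1" using S1ne by (intro cInf_greatest) auto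
  then show ?thesis unfolding cm1 cm2 by simp
qed


end
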